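(* Let $k$ be a square-free positive integer and $d$ a positive integer. Then $$e^*_k(d^2)=k^2\sum_{m\mid k}\mu(m)\Bigl(\prod_{p\mid m,\ p\text{ prime}}\frac{p^2-1}{p^2+1}\Bigr)e^*_1(d_m^2),$$ where $d_m=\max\{x\mid d:\gcd(x,m)=1\}=d/\prod_{p\mid m}p^{\nu_p(d)}$.
   Context: $\nu_p$ is the $p$-adic valuation and $\mu$ the Möbius function. For a positive integer $d$, define $\gamma_c(d^2)$ for $c\ge1$ as the multiplicative function of $c$ (i.e. $\gamma_{c}(d^2)=\prod_{p^r\| c}\gamma_{p^r}(d^2)$, $\gamma_1=1$) with: for $p=2$, $\gamma_{2^r}(d^2)=2^{r/2}$ if $r\ge2$ is even and $\nu_2(d^2)=r-2$; $=2^{(r-1)/2}$ if $r$ is odd and $\nu_2(d^2)\ge r-1$; $=0$ otherwise. For $p$ odd, $\gamma_{p^r}(d^2)=p^{r/2-1}(p-1)$ if $r\ge2$ is even and $\nu_p(d^2)\ge r$; $=p^{(r-1)/2}$ if $r$ is odd and $\nu_p(d^2)=r-1$; $=0$ otherwise. For a positive integer $k$, $e^*_k(d^2)=\sum_{c=1}^\infty\frac{\gcd(c,2k)^2}{c^2}\gamma_c(d^2)$ (absolutely convergent). *)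

theory Defs
  imports "HOL-Analysis.Analysis" "HOL-Computational_Algebra.Squarefree"
begin

definition moebius :: "nat \<Rightarrow> int" where
  "moebius m = (if squarefree m then (-1) ^ card (prime_factors m) else 0)"

text \<open>Local factor gamma_{p^r}(n), where n plays the role of d^2.\<close>
definition gamma_pp :: "nat \<Rightarrow> nat \<Rightarrow> nat \<Rightarrow> real" where
  "gamma_pp p r n =
    (if p = 2 then
       (if r \<ge> 2 \<and> even r \<and> multiplicity 2 n = r - 2 then 2 ^ (r div 2)
        else if odd r \<and> multiplicity 2 n \<ge> r - 1 then 2 ^ ((r - 1) div 2)
        else 0)
     else
       (if r \<ge> 2 \<and> even r \<and> multiplicity p n \<ge> r then real p ^ (r div 2 - 1) * (real p - 1)
        else if odd r \<and> multiplicity p n = r - 1 then real p ^ ((r - 1) div 2)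
        else 0))"

definition gamma :: "nat \<Rightarrow> nat \<Rightarrow> real" where
  "gamma c n = (\<Prod>p\<in>prime_factors c. gamma_pp p (multiplicity p c) n)"

definition estar :: "nat \<Rightarrow> nat \<Rightarrow> real" where
  "estar k n = (\<Sum>c. (real (gcd (Suc c) (2 * k)))\<^sup>2 / (real (Suc c))\<^sup>2 * gamma (Suc c) n)"

definition dpart :: "nat \<Rightarrow> nat \<Rightarrow> nat" where
  "dpart d m = d div (\<Prod>p\<in>prime_factors m. p ^ multiplicity p d)"

end

theory Submission
  imports Defs
begin


lemma gamma_pp_cong: "multiplicity p n = multiplicity p n' \<Longrightarrow> gamma_pp p r n = gamma_pp p r n'"
  unfolding gamma_pp_def by auto

lemma gamma_cong:
  assumes "\<And>q. q \<in> prime_factors c \<Longrightarrow> multiplicity q n = multiplicity q n'"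
  shows "gamma c n = gamma c n'"
  unfolding gamma_def by (intro prod.cong refl gamma_pp_cong assms)

lemma gamma_pp_nonneg: "p > 0 \<Longrightarrow> gamma_pp p r n \<ge> 0"
  unfolding gamma_pp_def by auto

lemma gamma_nonneg: "gamma c n \<ge> 0"
  unfolding gamma_def by (intro prod_nonneg) (auto intro: gamma_pp_nonneg simp: prime_gt_0_nat in_prime_factors_iff)

lemma gamma_zero:
  assumes "p \<in> prime_factors c" "gamma_pp p (multiplicity p c) n = 0"
  shows "gamma c n = 0"
  unfolding gamma_def using assms by (intro prod_zero) auto

lemma gamma_mult:
  fixes p c r :: nat
  assumes p: "prime p" and c: "c > 0" and nd: "\<not> p dvd c" and r: "r \<ge> 1"
  shows "gamma (p ^ r * c) n = gamma_pp p r n * gamma c n"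
proof -
  have pr0: "p ^ r \<noteq> 0" using p by (simp add: prime_gt_0_nat)
  have pf: "prime_factors (p ^ r * c) = insert p (prime_factors c)"
    using p r c pr0 by (simp add: prime_factors_product prime_factorization_prime_power)
  have pnot: "p \<notin> prime_factors c" using nd by (auto simp: in_prime_factors_iff)
  have mp: "multiplicity p (p ^ r * c) = r"
    using p c pr0 nd
    by (simp add: prime_elem_multiplicity_mult_distrib multiplicity_same_power not_dvd_imp_multiplicity_0)
  have mq: "multiplicity q (p ^ r * c) = multiplicity q c" if "q \<in> prime_factors c" for q
  proof -
    have q: "prime q" "q \<noteq> p" using that pnot by auto
    have "multiplicity q (p ^ r) = 0"
      using q p by (simp add: prime_elem_multiplicity_power_distrib prime_multiplicity_other)
    thus ?thesis using q p c pr0 by (simp add: prime_elem_multiplicity_mult_distrib)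
  qed
  show ?thesis
    unfolding gamma_def pf
    by (subst prod.insert) (auto simp: pnot mp mq intro!: prod.cong)
qed

lemma sqrt_prod: "finite A \<Longrightarrow> sqrt (\<Prod>x\<in>A. f x) = (\<Prod>x\<in>A. sqrt (f x))"
  by (induction A rule: finite_induct) (auto simp: real_sqrt_mult)

lemma gamma_pp_le:
  assumes "p \<ge> 2"
  shows "gamma_pp p r n \<le> sqrt (real p) ^ r"
proof -
  have p1: "real p \<ge> 1" using assms by simp
  have "gamma_pp p r n \<le> real p ^ (r div 2)"
  proof -
    have a: "real p ^ ((r - 1) div 2) \<le> real p ^ (r div 2)"
      using p1 by (intro power_increasing) auto
    have b: "real p ^ (r div 2 - 1) * (real p - 1) \<le> real p ^ (r div 2)" if "r \<ge> 2" for r :: nat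
    proof -
      have "real p ^ (r div 2 - 1) * (real p - 1) \<le> real p ^ (r div 2 - 1) * real p"
        using p1 by (intro mult_left_mono) auto
      also have "\<dots> = real p ^ (r div 2)"
      proof -
        have "r div 2 = Suc (r div 2 - 1)" using that by auto
        then show ?thesis by (metis power_Suc2)
      qed
      finally show ?thesis .
    qed
    show ?thesis unfolding gamma_pp_def using a b[of r] p1 by auto
  qed
  also have "\<dots> = sqrt (real p) ^ (2 * (r div 2))"
    by (simp add: power_mult)
  also have "\<dots> \<le> sqrt (real p) ^ r"
    using p1 by (intro power_increasing) auto
  finally show ?thesis .
qed

lemma gamma_le_sqrt:
  assumes "c > 0"
  shows "gamma c n \<le> sqrt (real c)"
proof -
  have "gamma c n \<le> (\<Prod>p\<in>prime_factors c. sqrt (real p) ^ multiplicity p c)"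
    unfolding gamma_def
    by (intro prod_mono conjI gamma_pp_nonneg gamma_pp_le)
       (auto simp: in_prime_factors_iff prime_gt_0_nat prime_ge_2_nat)
  also have "\<dots> = sqrt (real (\<Prod>p\<in>prime_factors c. p ^ multiplicity p c))"
    by (simp add: sqrt_prod real_sqrt_power)
  also have "\<dots> = sqrt (real c)"
    using prime_factorization_nat[OF assms] by simp
  finally show ?thesis .
qed

definition tt :: "nat \<Rightarrow> nat \<Rightarrow> nat \<Rightarrow> real" where
  "tt k n c = (real (gcd c (2 * k)))\<^sup>2 / (real c)\<^sup>2 * gamma c n"

lemma tt_0 [simp]: "tt k n 0 = 0" by (simp add: tt_def)

lemma tt_nonneg: "tt k n c \<ge> 0"
  unfolding tt_def by (intro mult_nonneg_nonneg divide_nonneg_nonneg gamma_nonneg) auto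

lemma tt_bound:
  assumes "k > 0"
  shows "tt k n c \<le> (2 * real k)\<^sup>2 * real c powr (-3/2)"
proof (cases "c = 0")
  case True thus ?thesis by simp
next
  case False
  have g: "real (gcd c (2 * k)) \<le> 2 * real k"
  proof -
    have "gcd c (2 * k) \<le> 2 * k" using assms by (intro gcd_le2_nat) simp
    hence "real (gcd c (2 * k)) \<le> real (2 * k)" by (simp only: of_nat_le_iff)
    thus ?thesis by simp
  qed
  have "tt k n c \<le> (2 * real k)\<^sup>2 / (real c)\<^sup>2 * sqrt (real c)"
    unfolding tt_def using False g
    by (intro mult_mono divide_right_mono power_mono gamma_le_sqrt) (auto simp: gamma_nonneg)
  also have "\<dots> = (2 * real k)\<^sup>2 * real c powr (-3/2)"
  proof -
    have c2: "real c powr 2 = (real c)\<^sup>2" using False by (simp add: powr_numeral)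
    have "sqrt (real c) / (real c)\<^sup>2 = real c powr (1/2) / real c powr 2"
      using False by (simp add: powr_half_sqrt c2)
    also have "\<dots> = real c powr (1/2 - 2)"
      by (rule powr_diff[symmetric])
    also have "(1/2 - 2 :: real) = -3/2" by simp
    finally have e: "sqrt (real c) / (real c)\<^sup>2 = real c powr (-3/2)" .
    show ?thesis by (subst e[symmetric]) simp
  qed
  finally show ?thesis .
qed

lemma tt_summable:
  assumes "k > 0"
  shows "summable (tt k n)"
proof (rule summable_comparison_test')
  show "summable (\<lambda>c. (2 * real k)\<^sup>2 * real c powr (-3/2))"
    by (intro summable_mult) (simp add: summable_real_powr_iff)
  show "norm (tt k n c) \<le> (2 * real k)\<^sup>2 * real c powr (-3/2)" for c
    using tt_bound[OF assms] tt_nonneg by simp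
qed

lemma estar_tt:
  assumes "k > 0"
  shows "estar k n = suminf (tt k n)"
  unfolding estar_def using suminf_split_head[OF tt_summable[OF assms, of n]]
  by (simp add: tt_def)

lemma ind_summable:
  fixes t :: "nat \<Rightarrow> real"
  assumes "summable t" "\<And>c. t c \<ge> 0"
  shows "summable (\<lambda>c. if P c then t c else 0)"
  by (rule summable_comparison_test'[OF assms(1)]) (use assms(2) in auto)

lemma mult_pow_times:
  fixes p c :: nat
  assumes "prime p" "c > 0"
  shows "multiplicity p (p ^ r * c) = r + multiplicity p c"
  using assms by (simp add: prime_elem_multiplicity_mult_distrib multiplicity_same_power prime_gt_0_nat)

lemma reindex_mult:
  fixes t :: "nat \<Rightarrow> real" and p r :: nat
  assumes p: "prime p" and s: "summable t" and nn: "\<And>c. t c \<ge> 0" and t0: "t 0 = 0"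
  shows "suminf (\<lambda>c. if multiplicity p c = r then t c else 0) =
         suminf (\<lambda>c. if multiplicity p c = 0 then t (p ^ r * c) else 0)"
proof -
  define f where "f = (\<lambda>c. if multiplicity p c = r then t c else 0)"
  have sf: "summable f" unfolding f_def by (rule ind_summable[OF s nn])
  have pr: "p ^ r > 0" using p by (simp add: prime_gt_0_nat)
  have sm: "strict_mono (\<lambda>c. p ^ r * c)"
    using pr by (intro strict_monoI) simp
  have z: "f n = 0" if "n \<notin> range (\<lambda>c. p ^ r * c)" for n
  proof (rule ccontr)
    assume "f n \<noteq> 0"
    hence "multiplicity p n = r" unfolding f_def by (auto split: if_splits)
    hence "p ^ r dvd n" by (metis multiplicity_dvd)
    then obtain m where "n = p ^ r * m" by blast
    with that show False by auto
  qed
  have "(\<lambda>c. f (p ^ r * c)) sums suminf f"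
    using sums_mono_reindex[of "\<lambda>c. p ^ r * c" f, OF sm z] summable_sums[OF sf] by blast
  moreover have "f (p ^ r * c) = (if multiplicity p c = 0 then t (p ^ r * c) else 0)" for c
  proof (cases "c = 0")
    case True thus ?thesis by (simp add: f_def t0)
  next
    case False thus ?thesis using mult_pow_times[OF p, of c r] by (simp add: f_def)
  qed
  ultimately show ?thesis unfolding f_def by (simp add: sums_unique)
qed

lemma gcd_prime_mult:
  fixes p m c :: nat
  assumes p: "prime p" and nd: "\<not> p dvd m"
  shows "gcd c (p * m) = (if p dvd c then p else 1) * gcd c m"
proof (cases "p dvd c")
  case True
  then obtain c' where c: "c = p * c'" by blast
  have "coprime p m" by (rule prime_imp_coprime[OF p nd])
  hence cop: "coprime m p" by (simp add: coprime_commute)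
  have "gcd c (p * m) = p * gcd c' m" by (simp add: c gcd_mult_distrib_nat)
  moreover have "gcd c m = gcd c' m" unfolding c by (rule gcd_mult_left_left_cancel[OF cop])
  ultimately show ?thesis using True by simp
next
  case False
  have "coprime p c" by (rule prime_imp_coprime[OF p False])
  hence cop: "coprime c p" by (simp add: coprime_commute)
  show ?thesis using False gcd_mult_right_left_cancel[OF cop] by simp
qed



lemma mult0_iff:
  fixes p c :: nat
  assumes "prime p" "c \<noteq> 0"
  shows "multiplicity p c = 0 \<longleftrightarrow> \<not> p dvd c"
  using assms by (intro multiplicity_eq_zero_iff) auto

lemma step_odd:
  fixes p k n n' :: nat
  assumes p: "prime p" "p \<noteq> 2" and k: "k > 0" "\<not> p dvd k"
    and n1: "multiplicity p n' = 0"
    and n2: "\<And>q. prime q \<Longrightarrow> q \<noteq> p \<Longrightarrow> multiplicity q n' = multiplicity q n"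
  shows "suminf (tt (p * k) n) = (real p)\<^sup>2 * suminf (tt k n)
           - (real p)\<^sup>2 * ((real p ^ 2 - 1) / (real p ^ 2 + 1)) * suminf (tt k n')"
proof -
  define h where "h = tt k n"
  define h' where "h' = tt k n'"
  define U where "U = suminf (\<lambda>c. if multiplicity p c = 0 then h c else 0)"
  have p0: "real p > 0" using p by (simp add: prime_gt_0_nat)
  have sh: "summable h" unfolding h_def by (rule tt_summable[OF k(1)])
  have sh': "summable h'" unfolding h'_def by (rule tt_summable[OF k(1)])
  have hnn: "h c \<ge> 0" "h' c \<ge> 0" for c unfolding h_def h'_def by (rule tt_nonneg)+
  have sU: "summable (\<lambda>c. if multiplicity p c = 0 then h c else 0)"
    by (rule ind_summable[OF sh hnn(1)])
  have nd2k: "\<not> p dvd 2 * k"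
  proof
    assume "p dvd 2 * k"
    hence "p dvd 2 \<or> p dvd k" using p(1) by (simp add: prime_dvd_mult_iff)
    moreover have "\<not> p dvd 2" using p by (metis primes_dvd_imp_eq two_is_prime_nat)
    ultimately show False using k by blast
  qed
  have P1: "tt (p * k) n c = (real p)\<^sup>2 * h c - ((real p)\<^sup>2 - 1) * (if multiplicity p c = 0 then h c else 0)" for c
  proof (cases "c = 0")
    case True thus ?thesis by (simp add: h_def)
  next
    case c0: False
    have g: "gcd c (2 * (p * k)) = (if p dvd c then p else 1) * gcd c (2 * k)"
      using gcd_prime_mult[OF p(1) nd2k, of c] by (simp add: ac_simps)
    show ?thesis
    proof (cases "p dvd c")
      case True
      hence "multiplicity p c \<noteq> 0" by (simp add: mult0_iff[OF p(1) c0])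
      thus ?thesis using True unfolding h_def tt_def g by (simp add: power_mult_distrib)
    next
      case f: False
      hence "multiplicity p c = 0" by (simp add: mult0_iff[OF p(1) c0])
      thus ?thesis using f c0 unfolding h_def tt_def g by (simp add: field_simps)
    qed
  qed
  have E1: "suminf (tt (p * k) n) = (real p)\<^sup>2 * suminf h - ((real p)\<^sup>2 - 1) * U"
  proof -
    have "suminf (tt (p * k) n) = suminf (\<lambda>c. (real p)\<^sup>2 * h c - ((real p)\<^sup>2 - 1) * (if multiplicity p c = 0 then h c else 0))"
      by (rule arg_cong[where f=suminf]) (rule ext, rule P1)
    also have "\<dots> = (real p)\<^sup>2 * suminf h - ((real p)\<^sup>2 - 1) * U"
    proof -
      have s1: "summable (\<lambda>c. (real p)\<^sup>2 * h c)" by (rule summable_mult[OF sh])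
      have s2: "summable (\<lambda>c. ((real p)\<^sup>2 - 1) * (if multiplicity p c = 0 then h c else 0))"
        by (rule summable_mult[OF sU])
      show ?thesis unfolding U_def suminf_diff[OF s1 s2, symmetric]
        by (simp add: suminf_mult[OF sh] suminf_mult[OF sU])
    qed
    finally show ?thesis .
  qed
  have P2: "h' c = (if multiplicity p c = 0 then h c else 0) + (if multiplicity p c = 1 then h' c else 0)" for c
  proof (cases "c = 0")
    case True thus ?thesis by (simp add: h_def h'_def)
  next
    case c0: False
    consider "multiplicity p c = 0" | "multiplicity p c = 1" | "multiplicity p c \<ge> 2" by linarith
    thus ?thesis
    proof cases
      case 1
      have "gamma c n' = gamma c n"
      proof (rule gamma_cong)
        fix q assume q: "q \<in> prime_factors c"
        hence "q \<noteq> p" using 1 c0 by (auto simp: mult0_iff[OF p(1) c0] in_prime_factors_iff)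
        thus "multiplicity q n' = multiplicity q n" using n2 q by auto
      qed
      thus ?thesis using 1 by (simp add: h_def h'_def tt_def)
    next
      case 2 thus ?thesis by simp
    next
      case 3
      have "p dvd c" using 3 mult0_iff[OF p(1) c0] by auto
      hence "p \<in> prime_factors c" using c0 p by (auto simp: in_prime_factors_iff)
      moreover have "gamma_pp p (multiplicity p c) n' = 0"
        using 3 p n1 unfolding gamma_pp_def by auto
      ultimately have "gamma c n' = 0" by (rule gamma_zero)
      thus ?thesis using 3 by (simp add: h'_def tt_def)
    qed
  qed
  have P3: "(if multiplicity p c = 0 then h' (p ^ 1 * c) else 0) = (if multiplicity p c = 0 then h c else 0) / (real p)\<^sup>2" for c
  proof (cases "c = 0 \<or> multiplicity p c \<noteq> 0")
    case True thus ?thesis by (auto simp: h_def h'_def)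
  next
    case False
    hence c0: "c > 0" and m0: "multiplicity p c = 0" by auto
    hence nd: "\<not> p dvd c" using mult0_iff[OF p(1)] by auto
    have "gamma (p ^ 1 * c) n' = gamma_pp p 1 n' * gamma c n'"
      by (rule gamma_mult[OF p(1) c0 nd]) simp
    also have "gamma_pp p 1 n' = 1" using p n1 unfolding gamma_pp_def by simp
    also have "gamma c n' = gamma c n"
    proof (rule gamma_cong)
      fix q assume q: "q \<in> prime_factors c"
      hence "q \<noteq> p" using nd by (auto simp: in_prime_factors_iff)
      thus "multiplicity q n' = multiplicity q n" using n2 q by auto
    qed
    finally have g: "gamma (p * c) n' = gamma c n" by simp
    have "coprime p (2 * k)" by (rule prime_imp_coprime[OF p(1) nd2k])
    hence "coprime (2 * k) p" by (simp add: coprime_commute)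
    hence gg: "gcd (p * c) (2 * k) = gcd c (2 * k)" by (rule gcd_mult_left_left_cancel)
    show ?thesis using m0 p0 c0 unfolding h_def h'_def tt_def power_one_right g gg
      by (simp add: power_mult_distrib field_simps)
  qed
  have E2: "suminf h' = U + U / (real p)\<^sup>2"
  proof -
    have "suminf h' = suminf (\<lambda>c. (if multiplicity p c = 0 then h c else 0) + (if multiplicity p c = 1 then h' c else 0))"
      by (rule arg_cong[where f=suminf]) (rule ext, rule P2)
    also have "\<dots> = U + suminf (\<lambda>c. if multiplicity p c = 1 then h' c else 0)"
      unfolding U_def by (rule suminf_add[symmetric]) (intro sU ind_summable sh' hnn)+
    also have "suminf (\<lambda>c. if multiplicity p c = 1 then h' c else 0)
             = suminf (\<lambda>c. if multiplicity p c = 0 then h' (p ^ 1 * c) else 0)"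
      by (rule reindex_mult[OF p(1) sh' hnn(2)]) (simp add: h'_def)
    also have "\<dots> = suminf (\<lambda>c. (if multiplicity p c = 0 then h c else 0) / (real p)\<^sup>2)"
      by (simp only: P3)
    also have "\<dots> = U / (real p)\<^sup>2" unfolding U_def by (rule suminf_divide[OF sU])
    finally show ?thesis .
  qed
  have aux: "x * ((x - 1) / (x + 1)) * (U + U / x) = (x - 1) * U" if "x > 0" for x :: real
  proof -
    have "x + 1 > 0" using that by simp
    hence "U + U / x = U * (x + 1) / x" using that by (simp add: field_simps)
    thus ?thesis using that \<open>x + 1 > 0\<close> by simp
  qed
  have key: "(real p)\<^sup>2 * ((real p ^ 2 - 1) / (real p ^ 2 + 1)) * (U + U / (real p)\<^sup>2) = ((real p)\<^sup>2 - 1) * U"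
    using aux[of "(real p)\<^sup>2"] p0 by simp
  show ?thesis
    unfolding E1 h_def[symmetric] h'_def[symmetric] E2 key by simp
qed

lemma gamma_pp_2_1: "gamma_pp 2 1 m = 1" "gamma_pp 2 (Suc 0) m = 1"
  unfolding gamma_pp_def by simp_all

lemma step_two:
  fixes p k n n' :: nat
  assumes p: "p = 2" and k: "k > 0" "\<not> 2 dvd k"
    and n1: "multiplicity 2 n' = 0"
    and n2: "\<And>q. prime q \<Longrightarrow> q \<noteq> 2 \<Longrightarrow> multiplicity q n' = multiplicity q n"
  shows "suminf (tt (p * k) n) = (real p)\<^sup>2 * suminf (tt k n)
           - (real p)\<^sup>2 * ((real p ^ 2 - 1) / (real p ^ 2 + 1)) * suminf (tt k n')"
proof -
  have p2: "prime (2::nat)" by simp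
  define h where "h = tt k n"
  define h' where "h' = tt k n'"
  define I0 where "I0 = (\<lambda>f c. if multiplicity (2::nat) c = 0 then f c else (0::real))"
  define V where "V = suminf (I0 h)"
  have sh: "summable h" unfolding h_def by (rule tt_summable[OF k(1)])
  have sh': "summable h'" unfolding h'_def by (rule tt_summable[OF k(1)])
  have hnn: "h c \<ge> 0" "h' c \<ge> 0" for c unfolding h_def h'_def by (rule tt_nonneg)+
  have sV: "summable (I0 h)" unfolding I0_def by (rule ind_summable[OF sh hnn(1)])
  have cop2k: "coprime k 2"
  proof -
    have "coprime 2 k" by (rule prime_imp_coprime[OF p2 k(2)])
    thus ?thesis by (simp add: coprime_commute)
  qed
  have odd_facts: "gamma (2 ^ 1 * c) n = gamma c n \<and> gamma (2 ^ 1 * c) n' = gamma c n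
     \<and> gamma (2 ^ 2 * c) n' = 2 * gamma c n
     \<and> gcd (2 ^ 1 * c) (2 * k) = 2 * gcd c (2 * k) \<and> gcd (2 ^ 2 * c) (2 * k) = 2 * gcd c (2 * k)"
    if c0: "c > 0" and nd: "\<not> 2 dvd c" for c
  proof -
    have gc: "gamma c n' = gamma c n"
    proof (rule gamma_cong)
      fix q assume q: "q \<in> prime_factors c"
      hence "q \<noteq> 2" using nd by (auto simp: in_prime_factors_iff)
      thus "multiplicity q n' = multiplicity q n" using n2 q by auto
    qed
    have "coprime 2 c" by (rule prime_imp_coprime[OF p2 nd])
    hence copc: "coprime c 2" by (simp add: coprime_commute)
    have gck: "gcd c (2 * k) = gcd c k" by (rule gcd_mult_right_left_cancel[OF copc])
    have g1: "gcd (2 ^ 1 * c) (2 * k) = 2 * gcd c k" by (simp add: gcd_mult_distrib_nat)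
    have "gcd (2 ^ 2 * c) (2 * k) = gcd (2 * (2 * c)) (2 * k)" by simp
    also have "\<dots> = 2 * gcd (2 * c) k" by (rule gcd_mult_distrib_nat[symmetric])
    also have "gcd (2 * c) k = gcd c k" by (rule gcd_mult_left_left_cancel[OF cop2k])
    finally have g2: "gcd (2 ^ 2 * c) (2 * k) = 2 * gcd c k" .
    have "gamma (2 ^ 1 * c) n = gamma c n"
      using gamma_mult[OF p2 c0 nd, of 1 n] by (simp add: gamma_pp_2_1)
    moreover have "gamma (2 ^ 1 * c) n' = gamma c n"
      using gamma_mult[OF p2 c0 nd, of 1 n'] gc by (simp add: gamma_pp_2_1)
    moreover have "gamma (2 ^ 2 * c) n' = 2 * gamma c n"
      using gamma_mult[OF p2 c0 nd, of 2 n'] gc n1 by (simp add: gamma_pp_def)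
    ultimately show ?thesis using g1 g2 gck by simp
  qed
  have Q1: "I0 (\<lambda>c. h (2 ^ 1 * c)) c = I0 h c"
       "I0 (\<lambda>c. h' (2 ^ 1 * c)) c = I0 h c"
       "I0 (\<lambda>c. h' (2 ^ 2 * c)) c = I0 h c / 2" for c
  proof -
    have "I0 (\<lambda>c. h (2 ^ 1 * c)) c = I0 h c \<and> I0 (\<lambda>c. h' (2 ^ 1 * c)) c = I0 h c
        \<and> I0 (\<lambda>c. h' (2 ^ 2 * c)) c = I0 h c / 2"
    proof (cases "c = 0 \<or> multiplicity 2 c \<noteq> 0")
      case True thus ?thesis by (auto simp: I0_def h_def h'_def)
    next
      case False
      hence c0: "c > 0" and m0: "multiplicity 2 c = 0" by auto
      hence nd: "\<not> 2 dvd c" using mult0_iff[OF p2] by auto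
      note f = odd_facts[OF c0 nd]
      show ?thesis using c0 unfolding I0_def h_def h'_def tt_def
        by (simp only: f m0 if_True) (simp add: power_mult_distrib field_simps)
    qed
    thus "I0 (\<lambda>c. h (2 ^ 1 * c)) c = I0 h c"
       "I0 (\<lambda>c. h' (2 ^ 1 * c)) c = I0 h c"
       "I0 (\<lambda>c. h' (2 ^ 2 * c)) c = I0 h c / 2" by auto
  qed
  have R: "suminf (\<lambda>c. if multiplicity 2 c = r then f c else 0) = suminf (I0 (\<lambda>c. f (2 ^ r * c)))"
    if "summable f" "\<And>c. f c \<ge> 0" "f 0 = 0" for f :: "nat \<Rightarrow> real" and r
    unfolding I0_def by (rule reindex_mult[OF p2 that])
  have P1: "tt (p * k) n c = 4 * h c - 3 * (I0 h c + (if multiplicity 2 c = 1 then h c else 0))" for c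
  proof (cases "c = 0")
    case True thus ?thesis by (simp add: h_def I0_def)
  next
    case c0: False
    have G: "gcd c (2 * (2 * k)) = (if multiplicity 2 c \<ge> 2 then 2 else 1) * gcd c (2 * k)"
    proof (cases "2 dvd c")
      case False
      have "coprime 2 c" by (rule prime_imp_coprime[OF p2 False])
      hence copc: "coprime c 2" by (simp add: coprime_commute)
      have "multiplicity 2 c = 0" using False mult0_iff[OF p2 c0] by auto
      thus ?thesis using gcd_mult_right_left_cancel[OF copc, of "2 * k"] by simp
    next
      case True
      then obtain c' where c': "c = 2 * c'" by blast
      have c'0: "c' > 0" using c0 c' by auto
      have m: "multiplicity 2 c = 1 + multiplicity 2 c'"
        using mult_pow_times[OF p2 c'0, of 1] c' by simp
      have "gcd c (2 * (2 * k)) = 2 * gcd c' (2 * k)" by (simp add: c' gcd_mult_distrib_nat)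
      also have "gcd c' (2 * k) = (if 2 dvd c' then 2 else 1) * gcd c' k"
        by (rule gcd_prime_mult[OF p2 k(2)])
      also have "gcd c (2 * k) = 2 * gcd c' k" by (simp add: c' gcd_mult_distrib_nat)
      moreover have "(2 dvd c') = (multiplicity 2 c \<ge> 2)"
        using m mult0_iff[OF p2, of c'] c'0 by auto
      ultimately show ?thesis by auto
    qed
    show ?thesis
    proof (cases "multiplicity 2 c \<ge> 2")
      case True thus ?thesis unfolding h_def tt_def I0_def p G by (simp add: power_mult_distrib)
    next
      case False
      thus ?thesis using c0 unfolding h_def tt_def I0_def p G by (auto simp: field_simps)
    qed
  qed
  have E1: "suminf (tt (p * k) n) = 4 * suminf h - 6 * V"
  proof -
    have s1: "summable (\<lambda>c. if multiplicity 2 c = 1 then h c else 0)" by (rule ind_summable[OF sh hnn(1)])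
    have W: "suminf (\<lambda>c. if multiplicity 2 c = 1 then h c else 0) = V"
    proof -
      have "suminf (\<lambda>c. if multiplicity 2 c = 1 then h c else 0) = suminf (I0 (\<lambda>c. h (2 ^ 1 * c)))"
        by (rule R[OF sh hnn(1)]) (simp add: h_def)
      also have "I0 (\<lambda>c. h (2 ^ 1 * c)) = I0 h" by (rule ext, rule Q1(1))
      finally show ?thesis unfolding V_def .
    qed
    have s2: "summable (\<lambda>c. I0 h c + (if multiplicity 2 c = 1 then h c else 0))"
      by (rule summable_add[OF sV s1])
    have "suminf (tt (p * k) n) = suminf (\<lambda>c. 4 * h c - 3 * (I0 h c + (if multiplicity 2 c = 1 then h c else 0)))"
      by (rule arg_cong[where f=suminf]) (rule ext, rule P1)
    also have "\<dots> = 4 * suminf h - 3 * suminf (\<lambda>c. I0 h c + (if multiplicity 2 c = 1 then h c else 0))"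
      using suminf_diff[OF summable_mult[OF sh] summable_mult[OF s2]] suminf_mult[OF sh] suminf_mult[OF s2]
      by simp
    also have "suminf (\<lambda>c. I0 h c + (if multiplicity 2 c = 1 then h c else 0)) = V + V"
      using suminf_add[OF sV s1] W V_def by simp
    finally show ?thesis by simp
  qed
  have P2: "h' c = I0 h c + (if multiplicity 2 c = 1 then h' c else 0) + (if multiplicity 2 c = 2 then h' c else 0)" for c
  proof (cases "c = 0")
    case True thus ?thesis by (simp add: h_def h'_def I0_def)
  next
    case c0: False
    consider "multiplicity 2 c = 0" | "multiplicity 2 c = 1" | "multiplicity 2 c = 2" | "multiplicity 2 c \<ge> 3" by linarith
    thus ?thesis
    proof cases
      case 1
      hence nd: "\<not> 2 dvd c" using mult0_iff[OF p2 c0] by auto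
      have "gamma c n' = gamma c n"
      proof (rule gamma_cong)
        fix q assume q: "q \<in> prime_factors c"
        hence "q \<noteq> 2" using nd by (auto simp: in_prime_factors_iff)
        thus "multiplicity q n' = multiplicity q n" using n2 q by auto
      qed
      thus ?thesis using 1 by (simp add: h_def h'_def tt_def I0_def)
    next
      case 2 thus ?thesis by (simp add: I0_def)
    next
      case 3 thus ?thesis by (simp add: I0_def)
    next
      case 4
      have "2 dvd c" using 4 mult0_iff[OF p2 c0] by auto
      hence "2 \<in> prime_factors c" using c0 by (auto simp: in_prime_factors_iff)
      moreover have "gamma_pp 2 (multiplicity 2 c) n' = 0"
        using 4 n1 unfolding gamma_pp_def by auto
      ultimately have "gamma c n' = 0" by (rule gamma_zero)
      thus ?thesis using 4 by (simp add: h'_def tt_def I0_def)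
    qed
  qed
  have E2: "suminf h' = V + V + V / 2"
  proof -
    have s1: "summable (\<lambda>c. if multiplicity 2 c = 1 then h' c else 0)" by (rule ind_summable[OF sh' hnn(2)])
    have s2: "summable (\<lambda>c. if multiplicity 2 c = 2 then h' c else 0)" by (rule ind_summable[OF sh' hnn(2)])
    have W1: "suminf (\<lambda>c. if multiplicity 2 c = 1 then h' c else 0) = V"
    proof -
      have "suminf (\<lambda>c. if multiplicity 2 c = 1 then h' c else 0) = suminf (I0 (\<lambda>c. h' (2 ^ 1 * c)))"
        by (rule R[OF sh' hnn(2)]) (simp add: h'_def)
      also have "I0 (\<lambda>c. h' (2 ^ 1 * c)) = I0 h" by (rule ext, rule Q1(2))
      finally show ?thesis unfolding V_def .
    qed
    have W2: "suminf (\<lambda>c. if multiplicity 2 c = 2 then h' c else 0) = V / 2"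
    proof -
      have "suminf (\<lambda>c. if multiplicity 2 c = 2 then h' c else 0) = suminf (I0 (\<lambda>c. h' (2 ^ 2 * c)))"
        by (rule R[OF sh' hnn(2)]) (simp add: h'_def)
      also have "I0 (\<lambda>c. h' (2 ^ 2 * c)) = (\<lambda>c. I0 h c / 2)" by (rule ext, rule Q1(3))
      also have "suminf (\<lambda>c. I0 h c / 2) = V / 2" unfolding V_def by (rule suminf_divide[OF sV])
      finally show ?thesis .
    qed
    have "suminf h' = suminf (\<lambda>c. I0 h c + (if multiplicity 2 c = 1 then h' c else 0) + (if multiplicity 2 c = 2 then h' c else 0))"
      by (rule arg_cong[where f=suminf]) (rule ext, rule P2)
    also have "\<dots> = suminf (\<lambda>c. I0 h c + (if multiplicity 2 c = 1 then h' c else 0)) + suminf (\<lambda>c. if multiplicity 2 c = 2 then h' c else 0)"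
      by (rule suminf_add[symmetric]) (intro summable_add sV s1, rule s2)
    also have "suminf (\<lambda>c. I0 h c + (if multiplicity 2 c = 1 then h' c else 0)) = V + V"
      using suminf_add[OF sV s1] W1 V_def by simp
    finally show ?thesis using W2 by simp
  qed
  show ?thesis unfolding E1 unfolding h_def[symmetric] h'_def[symmetric] E2 p by simp
qed

lemma step_estar:
  fixes p k n n' :: nat
  assumes p: "prime p" and k: "k > 0" "\<not> p dvd k"
    and n1: "multiplicity p n' = 0"
    and n2: "\<And>q. prime q \<Longrightarrow> q \<noteq> p \<Longrightarrow> multiplicity q n' = multiplicity q n"
  shows "estar (p * k) n = (real p)\<^sup>2 * estar k n
           - (real p)\<^sup>2 * ((real p ^ 2 - 1) / (real p ^ 2 + 1)) * estar k n'"
proof -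
  have pk: "p * k > 0" using p k by (simp add: prime_gt_0_nat)
  have "suminf (tt (p * k) n) = (real p)\<^sup>2 * suminf (tt k n)
           - (real p)\<^sup>2 * ((real p ^ 2 - 1) / (real p ^ 2 + 1)) * suminf (tt k n')"
  proof (cases "p = 2")
    case True thus ?thesis using step_two[OF True k(1)] k(2) n1 n2 by simp
  next
    case False thus ?thesis by (rule step_odd[OF p _ k n1 n2])
  qed
  thus ?thesis by (simp add: estar_tt[OF pk] estar_tt[OF k(1)])
qed

lemma estar_cong:
  assumes "\<And>q. prime q \<Longrightarrow> multiplicity q n = multiplicity q n'"
  shows "estar k n = estar k n'"
proof -
  have "gamma c n = gamma c n'" for c
    by (rule gamma_cong) (use assms in \<open>auto simp: in_prime_factors_iff\<close>)
  thus ?thesis unfolding estar_def by simp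
qed

lemma dpart_mult:
  fixes d m :: nat
  assumes d: "d > 0" and m: "m > 0"
  shows "dpart d m > 0"
    "\<And>q. prime q \<Longrightarrow> multiplicity q (dpart d m) = (if q \<in> prime_factors m then 0 else multiplicity q d)"
proof -
  define P where "P = (\<Prod>p\<in>prime_factors m. p ^ multiplicity p d)"
  have mP: "multiplicity q P = (if q \<in> prime_factors m then multiplicity q d else 0)" if "prime q" for q
    unfolding P_def by (rule multiplicity_prod_prime_powers) (auto simp: that in_prime_factors_iff)
  have P0: "P \<noteq> 0" unfolding P_def by (auto simp: in_prime_factors_iff)
  have "P dvd d"
    by (rule multiplicity_le_imp_dvd[OF P0]) (simp add: mP)
  hence dd: "d = P * dpart d m" unfolding dpart_def P_def[symmetric] by simp
  show pos: "dpart d m > 0" using dd d by (metis gr0I mult_0_right)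
  fix q :: nat assume q: "prime q"
  have "multiplicity q d = multiplicity q P + multiplicity q (dpart d m)"
    using pos P0 q by (subst dd) (simp add: prime_elem_multiplicity_mult_distrib)
  thus "multiplicity q (dpart d m) = (if q \<in> prime_factors m then 0 else multiplicity q d)"
    using mP[OF q] by auto
qed

lemma mult_sq: "prime (q::nat) \<Longrightarrow> x \<noteq> 0 \<Longrightarrow> multiplicity q (x\<^sup>2) = 2 * multiplicity q x"
  by (simp add: prime_elem_multiplicity_power_distrib)

lemma pf_prime: "prime (p::nat) \<Longrightarrow> prime_factors p = {p}"
  by (auto simp: in_prime_factors_iff primes_dvd_imp_eq prime_gt_0_nat)

definition RHS :: "nat \<Rightarrow> nat \<Rightarrow> real" where
  "RHS k d = (\<Sum>m | m dvd k.
       real_of_int (moebius m) *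
       (\<Prod>p\<in>prime_factors m. (real p ^ 2 - 1) / (real p ^ 2 + 1)) *
       estar 1 ((dpart d m)\<^sup>2))"

lemma main:
  fixes k :: nat
  assumes "k > 0" "squarefree k"
  shows "\<And>d. d > 0 \<Longrightarrow> estar k (d\<^sup>2) = (real k)\<^sup>2 * RHS k d"
  using assms
proof (induction k rule: less_induct)
  case (less k)
  show ?case
  proof (cases "k = 1")
    case True
    have s: "{m. m dvd (1::nat)} = {1}" by auto
    have "moebius 1 = 1" by (simp add: moebius_def)
    thus ?thesis using True by (simp add: RHS_def s dpart_def)
  next
    case False
    then obtain p where p: "prime p" "p dvd k" using prime_factor_nat by blast
    then obtain k' where kk: "k = p * k'" by blast
    have p0: "p > 0" using p by (simp add: prime_gt_0_nat)
    have k'0: "k' > 0" using less.prems(2) kk by (auto intro!: gr0I)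
    have nd: "\<not> p dvd k'"
    proof
      assume "p dvd k'"
      hence "p ^ 2 dvd k" using kk by (auto simp: power2_eq_square)
      hence "p dvd 1" using squarefreeD[OF less.prems(3)] by blast
      thus False using p by simp
    qed
    have sqk': "squarefree k'" using squarefree_multD(2) less.prems(3) kk by blast
    have lt: "k' < k" using kk k'0 prime_ge_2_nat[OF p(1)] by simp
    define dp where "dp = dpart d p"
    have dp0: "dp > 0" unfolding dp_def by (rule dpart_mult(1)[OF less.prems(1) p0])
    have mdp: "multiplicity q dp = (if q = p then 0 else multiplicity q d)" if "prime q" for q
      using dpart_mult(2)[OF less.prems(1) p0 that] pf_prime[OF p(1)] unfolding dp_def by simp
    have IH1: "estar k' (d\<^sup>2) = (real k')\<^sup>2 * RHS k' d"
      by (rule less.IH[OF lt less.prems(1) k'0 sqk'])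
    have IH2: "estar k' (dp\<^sup>2) = (real k')\<^sup>2 * RHS k' dp"
      by (rule less.IH[OF lt dp0 k'0 sqk'])
    define r where "r = (real p ^ 2 - 1) / (real p ^ 2 + 1)"
    have ST: "estar k (d\<^sup>2) = (real p)\<^sup>2 * estar k' (d\<^sup>2) - (real p)\<^sup>2 * r * estar k' (dp\<^sup>2)"
      unfolding kk r_def
    proof (rule step_estar[OF p(1) k'0 nd])
      show "multiplicity p (dp\<^sup>2) = 0" using mult_sq[OF p(1)] dp0 mdp[OF p(1)] by simp
      fix q :: nat assume q: "prime q" "q \<noteq> p"
      show "multiplicity q (dp\<^sup>2) = multiplicity q (d\<^sup>2)"
        using mult_sq[OF q(1)] dp0 less.prems(1) mdp[OF q(1)] q(2) by simp
    qed
    define F where "F = (\<lambda>e m. real_of_int (moebius m) *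
       (\<Prod>p\<in>prime_factors m. (real p ^ 2 - 1) / (real p ^ 2 + 1)) *
       estar 1 ((dpart e m)\<^sup>2))"
    have RHSF: "RHS j e = sum (F e) {m. m dvd j}" for j e unfolding RHS_def F_def by simp
    have fin: "finite {m. m dvd k'}" using k'0 by simp
    have setEq: "{m. m dvd k} = {m. m dvd k'} \<union> (\<lambda>m. p * m) ` {m. m dvd k'}"
    proof (intro set_eqI iffI)
      fix m assume "m \<in> {m. m dvd k}"
      hence mk: "m dvd p * k'" using kk by simp
      show "m \<in> {m. m dvd k'} \<union> (\<lambda>m. p * m) ` {m. m dvd k'}"
      proof (cases "p dvd m")
        case True
        then obtain m' where "m = p * m'" by blast
        with mk p0 have "m' dvd k'" by simp
        thus ?thesis using \<open>m = p * m'\<close> by blast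
      next
        case False
        have "coprime m p" using prime_imp_coprime[OF p(1) False] by (simp add: coprime_commute)
        hence "m dvd k'" using mk by (simp add: coprime_dvd_mult_right_iff)
        thus ?thesis by blast
      qed
    next
      fix m assume "m \<in> {m. m dvd k'} \<union> (\<lambda>m. p * m) ` {m. m dvd k'}"
      thus "m \<in> {m. m dvd k}" using kk by auto
    qed
    have disj: "{m. m dvd k'} \<inter> (\<lambda>m. p * m) ` {m. m dvd k'} = {}"
    proof (rule ccontr)
      assume "\<not> ?thesis"
      then obtain m where "p * m dvd k'" by auto
      hence "p dvd k'" by (rule dvd_mult_left)
      thus False using nd by simp
    qed
    have inj: "inj_on (\<lambda>m. p * m) {m. m dvd k'}" using p0 by (intro inj_onI) simp
    have Fp: "F d (p * m) = - r * F dp m" if "m dvd k'" for m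
    proof -
      have m0: "m > 0" using that k'0 by (auto intro!: gr0I)
      have ndm: "\<not> p dvd m" using that nd by (meson dvd_trans)
      have pfm: "prime_factors (p * m) = insert p (prime_factors m)"
        using p0 m0 pf_prime[OF p(1)] by (simp add: prime_factors_product)
      have pnot: "p \<notin> prime_factors m" using ndm by (auto simp: in_prime_factors_iff)
      have sqm: "squarefree m" using squarefree_mono[OF that sqk'] .
      have "coprime p m" by (rule prime_imp_coprime[OF p(1) ndm])
      hence sqpm: "squarefree (p * m)" using sqm squarefree_prime[OF p(1)] by (intro squarefree_mult_coprime)
      have mu: "moebius (p * m) = - moebius m"
        using sqm sqpm pnot unfolding moebius_def pfm by simp
      have Q: "(\<Prod>q\<in>prime_factors (p * m). (real q ^ 2 - 1) / (real q ^ 2 + 1))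
               = r * (\<Prod>q\<in>prime_factors m. (real q ^ 2 - 1) / (real q ^ 2 + 1))"
        unfolding pfm r_def using pnot by simp
      have E: "estar 1 ((dpart d (p * m))\<^sup>2) = estar 1 ((dpart dp m)\<^sup>2)"
      proof (rule estar_cong)
        fix q :: nat assume q: "prime q"
        have a: "dpart d (p * m) > 0" by (rule dpart_mult(1)[OF less.prems(1)]) (use p0 m0 in simp)
        have b: "dpart dp m > 0" by (rule dpart_mult(1)[OF dp0 m0])
        show "multiplicity q ((dpart d (p * m))\<^sup>2) = multiplicity q ((dpart dp m)\<^sup>2)"
          using mult_sq[OF q] a b dpart_mult(2)[OF less.prems(1), of "p * m" q] dpart_mult(2)[OF dp0 m0 q]
                mdp[OF q] pfm p0 m0 q by auto
      qed
      show ?thesis unfolding F_def mu Q E by simp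
    qed
    have "RHS k d = RHS k' d + sum (\<lambda>m. F d (p * m)) {m. m dvd k'}"
      unfolding RHSF setEq
      by (subst sum.union_disjoint) (use fin disj inj in \<open>auto simp: sum.reindex\<close>)
    also have "sum (\<lambda>m. F d (p * m)) {m. m dvd k'} = - r * RHS k' dp"
      unfolding RHSF sum_distrib_left by (rule sum.cong) (auto simp: Fp)
    finally have R: "RHS k d = RHS k' d - r * RHS k' dp" by simp
    have kr: "(real k)\<^sup>2 = (real p)\<^sup>2 * (real k')\<^sup>2" using kk by (simp add: power_mult_distrib)
    show ?thesis unfolding ST unfolding IH1 IH2 R kr by (simp add: algebra_simps)
  qed
qed


theorem lemma5p3:
  fixes k d :: nat
  assumes "k > 0" and "squarefree k" and "d > 0"
  shows "estar k (d\<^sup>2) =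
    (real k)\<^sup>2 * (\<Sum>m | m dvd k.
       real_of_int (moebius m) *
       (\<Prod>p\<in>prime_factors m. (real p ^ 2 - 1) / (real p ^ 2 + 1)) *
       estar 1 ((dpart d m)\<^sup>2))"
  using main[OF assms(1,2) assms(3)] unfolding RHS_def .

end
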